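(* There is an absolute constant $c>0$ such that for all $\sigma\in(\frac12,1)$ and all real $t$, \[\left|\frac{\hat{f}_\sigma(1-\sigma + it)}{\hat{f}_\sigma(1-\sigma)}\right| \leq \begin{cases} \left(1 + \dfrac{ct^2}{(1-\sigma)^2}\right)^{-1/2}, & |t|< \frac{1}{4},\\[2mm] 1-c, & |t| \geq \frac{1}{4}.\end{cases}\]
   Context: For $\sigma \in (\frac12,1)$, $c_\sigma>0$ and $f_\sigma:(0,\infty)\to(0,1)$ are determined by requiring that $f_\sigma$ be the unique continuous $(0,1)$-valued solution of $\frac{f_\sigma(x)}{(1-f_\sigma(x)^2)^2} = (c_\sigma/x)^\sigma$ and that $\int_0^\infty \frac{f_\sigma(x)^2}{1-f_\sigma(x)^2}dx = 1$. Its Mellin transform is $\hat{f}_\sigma(s) = \int_0^\infty f_\sigma(x)x^{s-1}dx$, which converges absolutely for $0<\Re(s)<\sigma$. *)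

theory Defs
  imports "HOL-Analysis.Analysis"
begin

definition f_aux :: "real \<Rightarrow> real \<Rightarrow> real \<Rightarrow> real" where
  "f_aux \<sigma> c x = (THE y. 0 < y \<and> y < 1 \<and> y / (1 - y\<^sup>2)\<^sup>2 = (c / x) powr \<sigma>)"

definition c_sigma :: "real \<Rightarrow> real" where
  "c_sigma \<sigma> = (THE c. 0 < c \<and>
      ((\<lambda>x. (f_aux \<sigma> c x)\<^sup>2 / (1 - (f_aux \<sigma> c x)\<^sup>2)) has_integral 1) {0<..})"

definition f_sigma :: "real \<Rightarrow> real \<Rightarrow> real" where
  "f_sigma \<sigma> x = f_aux \<sigma> (c_sigma \<sigma>) x"

definition mellin_f :: "real \<Rightarrow> complex \<Rightarrow> complex" where
  "mellin_f \<sigma> s = (LINT x:{0<..}|lborel. complex_of_real (f_sigma \<sigma> x) * complex_of_real x powr (s - 1))"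

end

theory Submission imports Defs begin


lemma powr_integral_Ioc:
  fixes w :: complex and y :: real
  assumes w: "0 < Re w" and y: "0 < y"
  shows "(LINT x:{0<..y}|lborel. complex_of_real x powr (w - 1)) = complex_of_real y powr w / w"
proof -
  have wne: "w \<noteq> 0" using w by auto
  have "(LBINT x=ereal 0..ereal y. complex_of_real x powr (w - 1)) = complex_of_real y powr w / w - 0"
  proof (rule interval_integral_FTC_integrable[where F="\<lambda>x. complex_of_real x powr w / w"])
    show "ereal 0 < ereal y" using y by simp
  next
    fix x assume "ereal 0 < ereal x" "ereal x < ereal y"
    then have x: "0 < x" by simp
    have "((\<lambda>z. z powr w / w) has_field_derivative (w * (of_real x) powr (w - 1) / w)) (at (complex_of_real x))"
      using x by (auto intro!: derivative_eq_intros simp: complex_nonpos_Reals_iff)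
    then show "((\<lambda>x. complex_of_real x powr w / w) has_vector_derivative complex_of_real x powr (w - 1)) (at x)"
      using wne by (auto dest: has_vector_derivative_real_field)
  next
    fix x assume "ereal 0 < ereal x" "ereal x < ereal y"
    then have x: "0 < x" by simp
    have "((\<lambda>z. z powr (w-1)) has_field_derivative ((w-1) * (of_real x) powr (w - 1 - 1))) (at (complex_of_real x))"
      using x by (auto intro!: derivative_eq_intros simp: complex_nonpos_Reals_iff)
    then show "isCont (\<lambda>x. complex_of_real x powr (w - 1)) x"
      by (auto dest!: has_vector_derivative_real_field intro: has_vector_derivative_continuous)
  next
    show "set_integrable lborel (einterval (ereal 0) (ereal y)) (\<lambda>x. complex_of_real x powr (w - 1))"
      unfolding set_integrable_def
    proof (rule Bochner_Integration.integrable_bound [OF _ _ AE_I2])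
      have "integrable lebesgue (\<lambda>x. indicat_real {0<..y} x *\<^sub>R x powr (Re w - 1))"
        using y w
        by (intro nonnegative_absolutely_integrable_1 [unfolded set_integrable_def] integrable_on_powr_from_0') auto
      then show "integrable lborel (\<lambda>x. indicat_real {0<..y} x *\<^sub>R x powr (Re w - 1))"
        by (subst integrable_completion[symmetric]) auto
      show "(\<lambda>x. indicat_real (einterval (ereal 0) (ereal y)) x *\<^sub>R complex_of_real x powr (w - 1)) \<in> borel_measurable lborel"
        by (auto intro!: borel_measurable_continuous_on_indicator continuous_intros simp: complex_nonpos_Reals_iff)
      fix x :: real
      show "norm (indicat_real (einterval (ereal 0) (ereal y)) x *\<^sub>R complex_of_real x powr (w - 1))
          \<le> norm (indicat_real {0<..y} x *\<^sub>R x powr (Re w - 1))"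
        by (auto simp: norm_powr_real_powr indicator_def)
    qed
  next
    show "(((\<lambda>x. complex_of_real x powr w / w) \<circ> real_of_ereal) \<longlongrightarrow> 0) (at_right (ereal 0))"
      unfolding ereal_tendsto_simps1
    proof (rule tendsto_norm_zero_cancel)
      have "((\<lambda>x. x powr Re w / norm w) \<longlongrightarrow> 0 powr Re w / norm w) (at_right 0)"
        using w by (intro tendsto_intros) (auto intro!: eventually_mono[OF eventually_at_right_less])
      then have "((\<lambda>x. x powr Re w / norm w) \<longlongrightarrow> 0) (at_right 0)" by simp
      then show "((\<lambda>x. norm (complex_of_real x powr w / w)) \<longlongrightarrow> 0) (at_right 0)"
        apply (rule Lim_transform_eventually)
        by (auto simp: eventually_at_right_less norm_divide norm_powr_real_powr intro!: eventually_mono[OF eventually_at_right_less])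
    qed
  next
    show "(((\<lambda>x. complex_of_real x powr w / w) \<circ> real_of_ereal) \<longlongrightarrow> complex_of_real y powr w / w) (at_left (ereal y))"
      unfolding ereal_tendsto_simps1
      using y wne by (intro tendsto_intros continuous_imp_tendsto) (auto intro!: continuous_intros tendsto_eq_intros simp: complex_nonpos_Reals_iff)
  qed
  then show ?thesis using y by (simp add: interval_integral_Ioc)
qed


definition Aset :: "(real \<Rightarrow> real) \<Rightarrow> (real \<times> real) set" where
  "Aset g = {p. 0 < fst p \<and> 0 < snd p \<and> snd p < g (fst p)}"

lemma Aset_meas:
  assumes gm[measurable]: "g \<in> borel_measurable borel"
  shows "Aset g \<in> sets (lborel \<Otimes>\<^sub>M lborel)"
proof -
  have "Measurable.pred (lborel \<Otimes>\<^sub>M lborel) (\<lambda>p. 0 < fst p \<and> 0 < snd p \<and> snd p < g (fst p))"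
    by measurable
  then show ?thesis unfolding Aset_def pred_def by (simp add: space_pair_measure)
qed

lemma indicator_Aset:
  "indicator (Aset g) (x,l) = (indicator {0<..} x * indicator {0<..<g x} l :: real)"
  by (auto simp: Aset_def indicator_def)

lemma pw_meas:
  "(\<lambda>x. indicator {0<..} x *\<^sub>R (complex_of_real x powr w)) \<in> borel_measurable borel"
  by (auto intro!: borel_measurable_continuous_on_indicator continuous_intros simp: complex_nonpos_Reals_iff)

lemma mellin_repr:
  fixes g :: "real \<Rightarrow> real" and w :: complex
  assumes gm[measurable]: "g \<in> borel_measurable borel"
  and gnn: "\<And>x. 0 < x \<Longrightarrow> 0 \<le> g x"
  and w: "0 < Re w"
  and int: "set_integrable lborel {0<..} (\<lambda>x. g x * x powr (Re w - 1))"
  shows "integrable lborel (\<lambda>l. LINT x|lborel. indicator (Aset g) (x,l) *\<^sub>R (complex_of_real x powr (w-1)))"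
    and "(LINT x:{0<..}|lborel. complex_of_real (g x) * complex_of_real x powr (w-1))
        = (LINT l|lborel. LINT x|lborel. indicator (Aset g) (x,l) *\<^sub>R (complex_of_real x powr (w-1)))"
proof -
  define p where "p = (\<lambda>x. indicator {0<..} x *\<^sub>R (complex_of_real x powr (w-1)))"
  have pm[measurable]: "p \<in> borel_measurable borel" unfolding p_def by (rule pw_meas)
  have Am[measurable]: "Aset g \<in> sets (lborel \<Otimes>\<^sub>M lborel)" by (rule Aset_meas[OF gm])
  define H where "H = (\<lambda>x l. indicator (Aset g) (x,l) *\<^sub>R (complex_of_real x powr (w-1)))"
  have H2: "H x l = indicator (Aset g) (x,l) *\<^sub>R p x" for x l
    by (auto simp: H_def p_def indicator_def Aset_def)
  have Hm: "case_prod H \<in> borel_measurable (lborel \<Otimes>\<^sub>M lborel)"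
  proof -
    have "(\<lambda>q. indicator (Aset g) q *\<^sub>R p (fst q)) \<in> borel_measurable (lborel \<Otimes>\<^sub>M lborel)"
      by measurable
    then show ?thesis by (simp add: H2 case_prod_beta')
  qed
  have inner_nn: "(\<integral>\<^sup>+l. ennreal (norm (H x l)) \<partial>lborel)
      = ennreal (norm (indicator {0<..} x *\<^sub>R (g x * x powr (Re w - 1))))" for x
  proof (cases "0 < x")
    case True
    have "(\<integral>\<^sup>+l. ennreal (norm (H x l)) \<partial>lborel)
        = (\<integral>\<^sup>+l. ennreal (x powr (Re w - 1)) * indicator {0<..<g x} l \<partial>lborel)"
      using True by (intro nn_integral_cong) (auto simp: H_def norm_powr_real_powr indicator_def Aset_def)
    also have "\<dots> = ennreal (x powr (Re w - 1)) * ennreal (g x)"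
      using gnn[OF True] by (simp add: nn_integral_cmult_indicator)
    also have "\<dots> = ennreal (norm (indicator {0<..} x *\<^sub>R (g x * x powr (Re w - 1))))"
      using True gnn[OF True] by (simp add: ennreal_mult' mult.commute)
    finally show ?thesis .
  next
    case False
    then show ?thesis by (simp add: H_def indicator_Aset)
  qed
  have int2: "integrable (lborel \<Otimes>\<^sub>M lborel) (case_prod H)"
    unfolding integrable_iff_bounded
  proof
    show "case_prod H \<in> borel_measurable (lborel \<Otimes>\<^sub>M lborel)" by (rule Hm)
    have "(\<integral>\<^sup>+q. ennreal (norm (case_prod H q)) \<partial>(lborel \<Otimes>\<^sub>M lborel))
        = (\<integral>\<^sup>+x. \<integral>\<^sup>+l. ennreal (norm (H x l)) \<partial>lborel \<partial>lborel)"
      by (subst lborel.nn_integral_fst[symmetric]) (use Hm in auto)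
    also have "\<dots> = (\<integral>\<^sup>+x. ennreal (norm (indicator {0<..} x *\<^sub>R (g x * x powr (Re w - 1)))) \<partial>lborel)"
      by (simp add: inner_nn)
    also have "\<dots> < \<infinity>"
      using int unfolding set_integrable_def integrable_iff_bounded by simp
    finally show "(\<integral>\<^sup>+q. ennreal (norm (case_prod H q)) \<partial>(lborel \<Otimes>\<^sub>M lborel)) < \<infinity>" .
  qed
  show "integrable lborel (\<lambda>l. LINT x|lborel. indicator (Aset g) (x,l) *\<^sub>R (complex_of_real x powr (w-1)))"
    using lborel_pair.integrable_snd[OF int2] by (simp add: H_def)
  have inner: "(LINT l|lborel. H x l) = indicator {0<..} x *\<^sub>R (complex_of_real (g x) * complex_of_real x powr (w-1))" for x
  proof (cases "0 < x")
    case True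
    have "(LINT l|lborel. H x l) = (LINT l|lborel. indicator {0<..<g x} l *\<^sub>R (complex_of_real x powr (w-1)))"
      using True by (intro Bochner_Integration.integral_cong) (auto simp: H_def indicator_Aset)
    also have "\<dots> = measure lborel {0<..<g x} *\<^sub>R (complex_of_real x powr (w-1))"
      using gnn[OF True] by (subst integral_scaleR_left) (auto intro!: integrable_real_indicator simp: emeasure_lborel_Ioo)
    also have "\<dots> = indicator {0<..} x *\<^sub>R (complex_of_real (g x) * complex_of_real x powr (w-1))"
      using True gnn[OF True] by (simp add: scaleR_conv_of_real)
    finally show ?thesis .
  next
    case False
    then show ?thesis by (simp add: H_def indicator_Aset)
  qed
  have "(LINT l|lborel. LINT x|lborel. H x l) = (LINT x|lborel. LINT l|lborel. H x l)"
    by (rule lborel_pair.Fubini_integral[OF int2])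
  then show "(LINT x:{0<..}|lborel. complex_of_real (g x) * complex_of_real x powr (w-1))
        = (LINT l|lborel. LINT x|lborel. indicator (Aset g) (x,l) *\<^sub>R (complex_of_real x powr (w-1)))"
  proof -
    have "(LINT x:{0<..}|lborel. complex_of_real (g x) * complex_of_real x powr (w-1))
       = (LINT x|lborel. LINT l|lborel. H x l)"
      by (simp only: inner set_lebesgue_integral_def)
    with \<open>(LINT l|lborel. LINT x|lborel. H x l) = _\<close> show ?thesis by (simp add: H_def)
  qed
qed


lemma inner_formula:
  fixes g :: "real \<Rightarrow> real"
  assumes gmono: "\<And>x y. 0 < x \<Longrightarrow> x \<le> y \<Longrightarrow> g y \<le> g x"
  and gdecay: "\<And>l. 0 < l \<Longrightarrow> \<exists>R. \<forall>x \<ge> R. g x \<le> l"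
  and l: "0 < l"
  shows "(\<forall>w::complex. (LINT x|lborel. indicator (Aset g) (x,l) *\<^sub>R (complex_of_real x powr (w-1))) = 0)
      \<or> (\<exists>y>0. \<forall>w::complex. (LINT x|lborel. indicator (Aset g) (x,l) *\<^sub>R (complex_of_real x powr (w-1)))
              = (LINT x:{0<..y}|lborel. complex_of_real x powr (w-1)))"
proof -
  define D where "D = {x. 0 < x \<and> l < g x}"
  have ind: "indicator (Aset g) (x,l) = (indicator D x :: real)" for x
    using l by (auto simp: Aset_def D_def indicator_def)
  show ?thesis
  proof (cases "D = {}")
    case True
    then show ?thesis by (simp add: ind)
  next
    case False
    then obtain x0 where x0: "x0 \<in> D" by auto
    obtain R where R: "\<forall>x \<ge> R. g x \<le> l" using gdecay[OF l] by auto
    have bdd: "bdd_above D"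
    proof (rule bdd_aboveI)
      fix x assume "x \<in> D"
      then have "l < g x" by (simp add: D_def)
      then show "x \<le> R" using R by (meson linorder_not_le not_le_imp_less order.strict_trans2 less_imp_le)
    qed
    define y where "y = Sup D"
    have ub: "x \<le> y" if "x \<in> D" for x using cSup_upper[OF that bdd] y_def by simp
    have y0: "0 < y" using ub[OF x0] x0 by (auto simp: D_def)
    have sub1: "D \<subseteq> {0<..y}" using ub by (auto simp: D_def)
    have sub2: "{0<..<y} \<subseteq> D"
    proof
      fix x assume x: "x \<in> {0<..<y}"
      then have "x < Sup D" by (simp add: y_def)
      then obtain d where d: "d \<in> D" "x < d" using less_cSup_iff[OF False bdd] by auto
      then show "x \<in> D" using x gmono[of x d] by (auto simp: D_def)
    qed
    have "\<forall>w::complex. (LINT x|lborel. indicator (Aset g) (x,l) *\<^sub>R (complex_of_real x powr (w-1)))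
              = (LINT x:{0<..y}|lborel. complex_of_real x powr (w-1))"
    proof (cases "y \<in> D")
      case True
      then have "D = {0<..y}" using sub1 sub2 by (auto simp: subset_iff) (metis greaterThanLessThan_iff less_eq_real_def)
      then show ?thesis by (simp add: ind set_lebesgue_integral_def)
    next
      case False
      then have "D = {0<..<y}" using sub1 sub2 by (auto simp: subset_iff) (metis greaterThanAtMost_iff less_eq_real_def)+
      moreover have "(LINT x:{0<..<y}|lborel. f x) = (LINT x:{0<..y}|lborel. f x)" for f :: "real \<Rightarrow> complex"
        using y0 interval_integral_Ioo[of "ereal 0" "ereal y" f] interval_integral_Ioc[of 0 y f]
        by simp
      ultimately show ?thesis by (simp add: ind set_lebesgue_integral_def)
    qed
    then show ?thesis using y0 by blast
  qed
qed


lemma pointwise_bound: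
  fixes g :: "real \<Rightarrow> real" and s :: complex
  assumes gmono: "\<And>x y. 0 < x \<Longrightarrow> x \<le> y \<Longrightarrow> g y \<le> g x"
  and gdecay: "\<And>l. 0 < l \<Longrightarrow> \<exists>R. \<forall>x \<ge> R. g x \<le> l"
  and s: "0 < Re s"
  shows "norm (LINT x|lborel. indicator (Aset g) (x,l) *\<^sub>R (complex_of_real x powr (s-1)))
    \<le> Re s / norm s * Re (LINT x|lborel. indicator (Aset g) (x,l) *\<^sub>R (complex_of_real x powr (complex_of_real (Re s) - 1)))"
proof (cases "0 < l")
  case False
  then have "indicator (Aset g) (x,l) = (0::real)" for x by (auto simp: Aset_def)
  then show ?thesis by simp
next
  case True
  from inner_formula[OF gmono gdecay True] show ?thesis
  proof
    assume "\<forall>w::complex. (LINT x|lborel. indicator (Aset g) (x,l) *\<^sub>R (complex_of_real x powr (w-1))) = 0"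
    then show ?thesis by simp
  next
    assume "\<exists>y>0. \<forall>w::complex. (LINT x|lborel. indicator (Aset g) (x,l) *\<^sub>R (complex_of_real x powr (w-1)))
              = (LINT x:{0<..y}|lborel. complex_of_real x powr (w-1))"
    then obtain y where y: "0 < y" and yy: "\<And>w::complex. (LINT x|lborel. indicator (Aset g) (x,l) *\<^sub>R (complex_of_real x powr (w-1)))
              = (LINT x:{0<..y}|lborel. complex_of_real x powr (w-1))" by blast
    have sne: "norm s > 0" using s by auto
    have "norm (LINT x|lborel. indicator (Aset g) (x,l) *\<^sub>R (complex_of_real x powr (s-1)))
        = norm (complex_of_real y powr s / s)" using yy powr_integral_Ioc[OF s y] by simp
    also have "\<dots> = y powr Re s / norm s" using y by (simp add: norm_divide norm_powr_real_powr)
    also have "\<dots> = Re s / norm s * Re (complex_of_real y powr (complex_of_real (Re s)) / complex_of_real (Re s))"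
      using s y sne by (simp add: powr_of_real Re_divide_of_real)
    also have "\<dots> = Re s / norm s * Re (LINT x|lborel. indicator (Aset g) (x,l) *\<^sub>R (complex_of_real x powr (complex_of_real (Re s) - 1)))"
      using yy powr_integral_Ioc[of "complex_of_real (Re s)" y] s y by simp
    finally show ?thesis by simp
  qed
qed

lemma mellin_bound:
  fixes g :: "real \<Rightarrow> real" and s :: complex
  assumes gm[measurable]: "g \<in> borel_measurable borel"
  and gnn: "\<And>x. 0 < x \<Longrightarrow> 0 \<le> g x"
  and gmono: "\<And>x y. 0 < x \<Longrightarrow> x \<le> y \<Longrightarrow> g y \<le> g x"
  and gdecay: "\<And>l. 0 < l \<Longrightarrow> \<exists>R. \<forall>x \<ge> R. g x \<le> l"
  and s: "0 < Re s"
  shows "norm (LINT x:{0<..}|lborel. complex_of_real (g x) * complex_of_real x powr (s - 1))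
     \<le> Re s / norm s * norm (LINT x:{0<..}|lborel. complex_of_real (g x) * complex_of_real x powr (complex_of_real (Re s) - 1))"
proof (cases "set_integrable lborel {0<..} (\<lambda>x. complex_of_real (g x) * complex_of_real x powr (s - 1))")
  case False
  then show ?thesis
    using s by (simp add: set_lebesgue_integral_def set_integrable_def not_integrable_integral_eq)
next
  case True
  define I where "I = (\<lambda>w l. LINT x|lborel. indicator (Aset g) (x,l) *\<^sub>R (complex_of_real x powr (w-1)))"
  define a where "a = Re s"
  have intR: "set_integrable lborel {0<..} (\<lambda>x. g x * x powr (a - 1))"
  proof -
    have "set_integrable lborel {0<..} (\<lambda>x. norm (complex_of_real (g x) * complex_of_real x powr (s - 1)))"
      using True by (rule set_integrable_norm)
    moreover have "norm (complex_of_real (g x) * complex_of_real x powr (s - 1)) = g x * x powr (a - 1)"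
      if "x \<in> {0<..}" for x
      using that gnn[of x] by (simp add: norm_mult norm_powr_real_powr a_def)
    ultimately show ?thesis using set_integrable_cong by (metis (no_types, lifting))
  qed
  have R1: "integrable lborel (I s)"
    "(LINT x:{0<..}|lborel. complex_of_real (g x) * complex_of_real x powr (s - 1)) = (LINT l|lborel. I s l)"
    using mellin_repr[OF gm gnn s] intR unfolding I_def a_def by auto
  have R2: "integrable lborel (I (of_real a))"
    "(LINT x:{0<..}|lborel. complex_of_real (g x) * complex_of_real x powr (complex_of_real a - 1)) = (LINT l|lborel. I (of_real a) l)"
    using mellin_repr[OF gm gnn, of "of_real a"] intR s unfolding I_def a_def by auto
  have "norm (LINT l|lborel. I s l) \<le> (LINT l|lborel. norm (I s l))"
    by (rule integral_norm_bound)
  also have "\<dots> \<le> (LINT l|lborel. a / norm s * Re (I (of_real a) l))"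
    using R1(1) R2(1) pointwise_bound[OF gmono gdecay s] unfolding I_def a_def
    by (intro integral_mono) auto
  also have "\<dots> = a / norm s * Re (LINT l|lborel. I (of_real a) l)"
    using R2(1) by simp
  also have "\<dots> \<le> a / norm s * norm (LINT l|lborel. I (of_real a) l)"
    using s by (intro mult_left_mono complex_Re_le_cmod) (auto simp: a_def)
  finally show ?thesis using R1(2) R2(2) by (simp add: a_def)
qed


definition phi :: "real \<Rightarrow> real" where "phi y = y / (1 - y\<^sup>2)\<^sup>2"

lemma phi_strict_mono:
  assumes "0 < y" "y < z" "z < 1"
  shows "phi y < phi z"
proof -
  have "z * z < 1 * 1" using assms by (intro mult_strict_mono) auto
  then have a: "0 < 1 - z\<^sup>2" by (simp add: power2_eq_square)
  have "y * y < z * z" using assms by (intro mult_strict_mono) auto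
  then have b: "1 - z\<^sup>2 < 1 - y\<^sup>2" by (simp add: power2_eq_square)
  have "(1 - z\<^sup>2)\<^sup>2 < (1 - y\<^sup>2)\<^sup>2" using a b by (intro power_strict_mono) auto
  then show ?thesis unfolding phi_def using assms a
    by (intro frac_less2) auto
qed

lemma phi_exists:
  assumes v: "0 < v"
  shows "\<exists>y. 0 < y \<and> y < 1 \<and> phi y = v"
proof -
  define t where "t = 1 / (2 * (v + 1))"
  have t: "0 < t" "t \<le> 1/2" using v by (auto simp: t_def field_simps)
  define b where "b = sqrt (1 - t)"
  have b2: "b\<^sup>2 = 1 - t" using t by (simp add: b_def)
  have bh: "1/2 \<le> b" unfolding b_def using t by (intro real_le_rsqrt) (simp add: power2_eq_square)
  have b1: "b < 1" unfolding b_def using t by simp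
  have "phi b = b / t\<^sup>2" by (simp add: phi_def b2)
  also have "\<dots> \<ge> (1/2) / t\<^sup>2" using bh t by (intro divide_right_mono) auto
  finally have pb: "phi b \<ge> (1/2) / t\<^sup>2" .
  have "(1/2) / t\<^sup>2 = 2 * (v+1)\<^sup>2" using v by (simp add: t_def field_simps power2_eq_square)
  also have "\<dots> \<ge> v" using v mult_nonneg_nonneg[of v v] by (simp add: power2_eq_square algebra_simps)
  finally have "v \<le> phi b" using pb by simp
  moreover have "phi 0 \<le> v" using v by (simp add: phi_def)
  moreover have "continuous_on {0..b} phi"
  proof -
    have "\<forall>y\<in>{0..b}. (1 - y\<^sup>2)\<^sup>2 \<noteq> 0"
    proof
      fix y assume y: "y \<in> {0..b}"
      then have "y\<^sup>2 \<le> b\<^sup>2" by (intro power_mono) auto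
      then show "(1 - y\<^sup>2)\<^sup>2 \<noteq> 0" using b2 t by auto
    qed
    then show ?thesis unfolding phi_def by (intro continuous_intros) auto
  qed
  ultimately obtain y where y: "0 \<le> y" "y \<le> b" "phi y = v"
    using IVT'[of phi 0 v b] bh by auto
  then have "y \<noteq> 0" using v by (auto simp: phi_def)
  then show ?thesis using y b1 by (intro exI[of _ y]) auto
qed

lemma f_aux_props:
  assumes c: "0 < c" and x: "0 < x"
  shows "0 < f_aux \<sigma> c x \<and> f_aux \<sigma> c x < 1 \<and> phi (f_aux \<sigma> c x) = (c / x) powr \<sigma>"
proof -
  have v: "0 < (c / x) powr \<sigma>" using c x by simp
  have ex: "\<exists>!y. 0 < y \<and> y < 1 \<and> y / (1 - y\<^sup>2)\<^sup>2 = (c / x) powr \<sigma>"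
  proof -
    obtain y where y: "0 < y \<and> y < 1 \<and> phi y = (c / x) powr \<sigma>" using phi_exists[OF v] by auto
    show ?thesis
    proof (rule ex1I[of _ y])
      show "0 < y \<and> y < 1 \<and> y / (1 - y\<^sup>2)\<^sup>2 = (c / x) powr \<sigma>" using y by (simp add: phi_def)
    next
      fix z assume z: "0 < z \<and> z < 1 \<and> z / (1 - z\<^sup>2)\<^sup>2 = (c / x) powr \<sigma>"
      show "z = y"
      proof (rule ccontr)
        assume "z \<noteq> y"
        then consider "z < y" | "y < z" by linarith
        then show False
          using phi_strict_mono[of z y] phi_strict_mono[of y z] y z by (cases; auto simp: phi_def)
      qed
    qed
  qed
  show ?thesis unfolding f_aux_def phi_def using theI'[OF ex] by simp
qed

lemma f_aux_anti:
  assumes c: "0 < c" and x: "0 < x" and xy: "x \<le> y" and \<sigma>: "0 < \<sigma>"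
  shows "f_aux \<sigma> c y \<le> f_aux \<sigma> c x"
proof (rule ccontr)
  assume "\<not> ?thesis"
  then have "f_aux \<sigma> c x < f_aux \<sigma> c y" by simp
  then have "phi (f_aux \<sigma> c x) < phi (f_aux \<sigma> c y)"
    using f_aux_props[OF c x] f_aux_props[OF c, of y] x xy by (intro phi_strict_mono) auto
  moreover have "(c / y) powr \<sigma> \<le> (c / x) powr \<sigma>"
    using c x xy \<sigma> by (intro powr_mono2 divide_left_mono) auto
  ultimately show False using f_aux_props[OF c x] f_aux_props[OF c, of y] x xy by auto
qed

lemma f_le_phi:
  assumes "0 < y" "y < 1"
  shows "y \<le> phi y"
proof -
  have "y * y < 1 * 1" using assms by (intro mult_strict_mono) auto
  then have "0 < 1 - y\<^sup>2" "1 - y\<^sup>2 \<le> 1" by (auto simp: power2_eq_square)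
  then have "(1 - y\<^sup>2)\<^sup>2 \<le> 1" "0 < (1 - y\<^sup>2)\<^sup>2" by (auto simp: power_le_one)
  then show ?thesis unfolding phi_def using assms by (simp add: le_divide_eq)
qed

lemma f_aux_decay:
  assumes c: "0 < c" and \<sigma>: "0 < \<sigma>" and l: "0 < l"
  shows "\<exists>R. \<forall>x \<ge> R. f_aux \<sigma> c x \<le> l"
proof -
  define R where "R = c / (l powr (1/\<sigma>))"
  have R: "0 < R" using c l by (simp add: R_def)
  have "(c / R) powr \<sigma> = l" using l \<sigma> c by (simp add: R_def powr_powr)
  show ?thesis
  proof (intro exI allI impI)
    fix x assume x: "R \<le> x"
    then have x0: "0 < x" using R by simp
    have "f_aux \<sigma> c x \<le> phi (f_aux \<sigma> c x)" using f_aux_props[OF c x0] f_le_phi[of "f_aux \<sigma> c x"] by auto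
    also have "\<dots> = (c / x) powr \<sigma>" using f_aux_props[OF c x0] by simp
    also have "\<dots> \<le> (c / R) powr \<sigma>" using c x R \<sigma> by (intro powr_mono2 divide_left_mono) auto
    also have "\<dots> = l" by fact
    finally show "f_aux \<sigma> c x \<le> l" .
  qed
qed


definition gg :: "real \<Rightarrow> real \<Rightarrow> real \<Rightarrow> real" where
  "gg \<sigma> c x = (if 0 < x then f_aux \<sigma> c x else 1)"

definition hh :: "real \<Rightarrow> real \<Rightarrow> real \<Rightarrow> real" where
  "hh \<sigma> c x = (if 0 < x then (f_aux \<sigma> c x)\<^sup>2 / (1 - (f_aux \<sigma> c x)\<^sup>2) else 0)"

lemma gg_meas:
  assumes c: "0 < c" and \<sigma>: "0 < \<sigma>"
  shows "gg \<sigma> c \<in> borel_measurable borel"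
proof -
  have "mono (\<lambda>x. - gg \<sigma> c x)"
  proof (rule monoI)
    fix x y :: real assume xy: "x \<le> y"
    show "- gg \<sigma> c x \<le> - gg \<sigma> c y"
    proof (cases "0 < x")
      case True
      then show ?thesis using f_aux_anti[OF c True xy \<sigma>] xy by (simp add: gg_def)
    next
      case False
      then show ?thesis using f_aux_props[OF c, of y \<sigma>] by (auto simp: gg_def)
    qed
  qed
  then have "(\<lambda>x. - gg \<sigma> c x) \<in> borel_measurable borel" by (rule borel_measurable_mono)
  then have "(\<lambda>x. - (- gg \<sigma> c x)) \<in> borel_measurable borel" by measurable
  then show ?thesis by simp
qed

lemma hh_meas:
  assumes c: "0 < c" and \<sigma>: "0 < \<sigma>"
  shows "hh \<sigma> c \<in> borel_measurable borel"
proof -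
  have [measurable]: "gg \<sigma> c \<in> borel_measurable borel" by (rule gg_meas[OF c \<sigma>])
  have "(\<lambda>x. indicator {0<..} x * ((gg \<sigma> c x)\<^sup>2 / (1 - (gg \<sigma> c x)\<^sup>2))) \<in> borel_measurable borel"
    by measurable
  moreover have "(\<lambda>x. indicator {0<..} x * ((gg \<sigma> c x)\<^sup>2 / (1 - (gg \<sigma> c x)\<^sup>2))) = hh \<sigma> c"
    by (auto simp: hh_def gg_def indicator_def fun_eq_iff)
  ultimately show ?thesis by metis
qed

lemma hh_scale: "hh \<sigma> c x = hh \<sigma> 1 (x / c)" if "0 < c"
  using that by (simp add: hh_def f_aux_def zero_less_divide_iff)

lemma hh_nonneg: assumes x: "0 < x" shows "0 \<le> hh \<sigma> 1 x"
proof -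
  define f where "f = f_aux \<sigma> 1 x"
  have f: "0 < f" "f < 1" using f_aux_props[of 1 x \<sigma>] x by (auto simp: f_def)
  have "f * f < 1 * 1" using f by (intro mult_strict_mono) auto
  then have "0 \<le> f\<^sup>2 / (1 - f\<^sup>2)" by (simp add: power2_eq_square)
  then show ?thesis using x by (simp add: hh_def f_def)
qed

lemma hh_bounds:
  assumes x: "0 < x" and \<sigma>: "0 < \<sigma>"
  shows "hh \<sigma> 1 x \<le> x powr (-\<sigma>/2)" "hh \<sigma> 1 x \<le> x powr (-(2*\<sigma>))"
proof -
  define f where "f = f_aux \<sigma> 1 x"
  have f: "0 < f" "f < 1" "phi f = (1/x) powr \<sigma>" using f_aux_props[of 1 x \<sigma>] x by (auto simp: f_def)
  define d where "d = 1 - f\<^sup>2"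
  have "f * f < 1 * 1" using f by (intro mult_strict_mono) auto
  then have d: "0 < d" "d \<le> 1" using f by (auto simp: d_def power2_eq_square)
  have u: "(1/x) powr \<sigma> = x powr (-\<sigma>)" using x by (simp add: powr_minus_divide powr_divide)
  have h: "hh \<sigma> 1 x = f\<^sup>2 / d" using x by (simp add: hh_def f_def d_def)
  have ph: "phi f = f / d\<^sup>2" by (simp add: phi_def d_def)
  have "(f\<^sup>2 / d)\<^sup>2 = f^4 / d\<^sup>2" by (simp add: power_divide flip: power_mult)
  also have "\<dots> \<le> f / d\<^sup>2"
  proof (rule divide_right_mono)
    have "f^3 \<le> 1" using f by (simp add: power_le_one)
    then have "f * f^3 \<le> f * 1" using f by (intro mult_left_mono) auto
    then show "f^4 \<le> f" by (simp add: power_numeral_reduce)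
  qed simp
  also have "\<dots> = x powr (-\<sigma>)" using ph f u by simp
  finally have "(hh \<sigma> 1 x)\<^sup>2 \<le> x powr (-\<sigma>)" using h by simp
  then have "hh \<sigma> 1 x \<le> sqrt (x powr (-\<sigma>))" by (rule real_le_rsqrt)
  also have "\<dots> = x powr (-\<sigma>/2)" using x by (simp add: sqrt_def root_powr_inverse powr_powr)
  finally show "hh \<sigma> 1 x \<le> x powr (-\<sigma>/2)" .
  have "d^4 \<le> d"
  proof -
    have "d^3 \<le> 1" using d by (simp add: power_le_one)
    then have "d * d^3 \<le> d * 1" using d by (intro mult_left_mono) auto
    then show ?thesis by (simp add: power_numeral_reduce)
  qed
  then have "f\<^sup>2 / d \<le> f\<^sup>2 / d^4" using d by (intro divide_left_mono) auto
  also have "\<dots> = (f / d\<^sup>2)\<^sup>2" by (simp add: power_divide power2_eq_square power_numeral_reduce)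
  also have "\<dots> = (x powr (-\<sigma>))\<^sup>2" using ph f u by simp
  also have "\<dots> = x powr (-(2*\<sigma>))" using x by (simp add: power2_eq_square powr_add[symmetric])
  finally show "hh \<sigma> 1 x \<le> x powr (-(2*\<sigma>))" using h by simp
qed

lemma hh_lower:
  assumes x: "1 \<le> x" "x \<le> 2" and \<sigma>: "0 < \<sigma>" "\<sigma> < 1"
  shows "1/16 \<le> hh \<sigma> 1 x"
proof -
  define f where "f = f_aux \<sigma> 1 x"
  have f: "0 < f" "f < 1" "phi f = (1/x) powr \<sigma>" using f_aux_props[of 1 x \<sigma>] x by (auto simp: f_def)
  have "(1/2) powr 1 \<le> (1/2) powr \<sigma>" using \<sigma> by (intro powr_mono') auto
  also have "\<dots> \<le> (1/x) powr \<sigma>" using x \<sigma> by (intro powr_mono2) (auto simp: field_simps)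
  finally have u: "1/2 \<le> phi f" using f by simp
  have f4: "1/4 \<le> f"
  proof (rule ccontr)
    assume "\<not> 1/4 \<le> f"
    then have "phi f < phi (1/4)" using f by (intro phi_strict_mono) auto
    also have "phi (1/4) = 64/225" by (simp add: phi_def power2_eq_square)
    finally show False using u by simp
  qed
  define d where "d = 1 - f\<^sup>2"
  have "f * f < 1 * 1" using f by (intro mult_strict_mono) auto
  then have d: "0 < d" "d \<le> 1" using f by (auto simp: d_def power2_eq_square)
  have "(1/4)\<^sup>2 \<le> f\<^sup>2" using f4 by (intro power_mono) auto
  then have "1/16 \<le> f\<^sup>2" by (simp add: power2_eq_square)
  also have "f\<^sup>2 \<le> f\<^sup>2 / d" using d by (simp add: le_divide_eq mult_left_le)
  also have "\<dots> = hh \<sigma> 1 x" using x by (simp add: hh_def f_def d_def)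
  finally show ?thesis .
qed


lemma hh_nonneg': "0 \<le> hh \<sigma> 1 x"
  by (cases "0 < x") (auto simp: hh_nonneg, simp add: hh_def)

lemma hh_integrable:
  assumes \<sigma>: "1/2 < \<sigma>" "\<sigma> < 1"
  shows "integrable lborel (hh \<sigma> 1)"
proof (rule Bochner_Integration.integrable_bound [OF _ _ AE_I2])
  define b1 where "b1 = (\<lambda>x::real. indicator {0<..1} x *\<^sub>R x powr (-\<sigma>/2))"
  define b2 where "b2 = (\<lambda>x::real. indicator {1..} x *\<^sub>R x powr (-(2*\<sigma>)))"
  have i1: "integrable lborel b1"
  proof -
    have "integrable lebesgue b1" unfolding b1_def
      using \<sigma> by (intro nonnegative_absolutely_integrable_1 [unfolded set_integrable_def] integrable_on_powr_from_0') auto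
    moreover have "b1 \<in> borel_measurable borel" unfolding b1_def
      by (auto intro!: borel_measurable_continuous_on_indicator continuous_intros)
    ultimately show ?thesis by (subst integrable_completion[symmetric]) auto
  qed
  have i2: "integrable lborel b2"
  proof -
    have "(\<lambda>x::real. x powr (-(2*\<sigma>))) integrable_on {1..}"
      using has_integral_powr_to_inf[of "-(2*\<sigma>)" 1] \<sigma> unfolding integrable_on_def by auto
    then have "integrable lebesgue b2" unfolding b2_def
      by (intro nonnegative_absolutely_integrable_1 [unfolded set_integrable_def]) auto
    moreover have "b2 \<in> borel_measurable borel" unfolding b2_def
      by (auto intro!: borel_measurable_continuous_on_indicator continuous_intros)
    ultimately show ?thesis by (subst integrable_completion[symmetric]) auto
  qed
  show "integrable lborel (\<lambda>x. b1 x + b2 x)" using i1 i2 by simp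
  show "hh \<sigma> 1 \<in> borel_measurable lborel" using hh_meas[of 1 \<sigma>] \<sigma> by simp
  fix x :: real
  show "norm (hh \<sigma> 1 x) \<le> norm (b1 x + b2 x)"
  proof (cases "0 < x")
    case False
    then show ?thesis by (simp add: hh_def)
  next
    case True
    have nn: "0 \<le> b1 x" "0 \<le> b2 x" by (auto simp: b1_def b2_def)
    have "hh \<sigma> 1 x \<le> b1 x + b2 x"
    proof (cases "x \<le> 1")
      case True
      then have "hh \<sigma> 1 x \<le> b1 x" using hh_bounds[of x \<sigma>] \<open>0 < x\<close> \<sigma> by (simp add: b1_def)
      then show ?thesis using nn by simp
    next
      case False
      then have "hh \<sigma> 1 x \<le> b2 x" using hh_bounds[of x \<sigma>] \<open>0 < x\<close> \<sigma> by (simp add: b2_def)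
      then show ?thesis using nn by simp
    qed
    then show ?thesis using hh_nonneg[OF True, of \<sigma>] nn by simp
  qed
qed

lemma hh_pos:
  assumes \<sigma>: "1/2 < \<sigma>" "\<sigma> < 1"
  shows "0 < integral\<^sup>L lborel (hh \<sigma> 1)"
proof -
  have "(LINT x|lborel. indicator {1..2::real} x / 16) \<le> integral\<^sup>L lborel (hh \<sigma> 1)"
  proof (rule integral_mono)
    show "integrable lborel (\<lambda>x. indicat_real {1..2::real} x / 16)" by simp
    show "integrable lborel (hh \<sigma> 1)" by (rule hh_integrable[OF \<sigma>])
    fix x :: real
    show "indicat_real {1..2::real} x / 16 \<le> hh \<sigma> 1 x"
      using hh_lower[of x \<sigma>] hh_nonneg'[of \<sigma> x] \<sigma> by (auto simp: indicator_def)
  qed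
  moreover have "(LINT x|lborel. indicator {1..2::real} x / 16) = (1/16 :: real)" by simp
  ultimately show ?thesis by simp
qed

lemma hh_scaled:
  assumes \<sigma>: "1/2 < \<sigma>" "\<sigma> < 1" and c: "0 < c"
  shows "integrable lborel (hh \<sigma> c)" "integral\<^sup>L lborel (hh \<sigma> c) = c * integral\<^sup>L lborel (hh \<sigma> 1)"
proof -
  have eq: "hh \<sigma> c (c * x) = hh \<sigma> 1 x" for x using c by (simp add: hh_scale[OF c])
  have "integrable lborel (\<lambda>x. hh \<sigma> c (0 + c * x))" using hh_integrable[OF \<sigma>] by (simp add: eq)
  then show "integrable lborel (hh \<sigma> c)" using lborel_integrable_real_affine_iff[of c "hh \<sigma> c" 0] c by simp
  show "integral\<^sup>L lborel (hh \<sigma> c) = c * integral\<^sup>L lborel (hh \<sigma> 1)"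
    using lborel_integral_real_affine[of c "hh \<sigma> c" 0] c by (simp add: eq)
qed

lemma c_sigma_pos:
  assumes \<sigma>: "1/2 < \<sigma>" "\<sigma> < 1"
  shows "0 < c_sigma \<sigma>"
proof -
  define I where "I = integral\<^sup>L lborel (hh \<sigma> 1)"
  have I: "0 < I" using hh_pos[OF \<sigma>] by (simp add: I_def)
  have key: "((\<lambda>x. (f_aux \<sigma> c x)\<^sup>2 / (1 - (f_aux \<sigma> c x)\<^sup>2)) has_integral J) {0<..}
      \<longleftrightarrow> J = c * I" if c: "0 < c" for c J
  proof -
    have "((\<lambda>x. (f_aux \<sigma> c x)\<^sup>2 / (1 - (f_aux \<sigma> c x)\<^sup>2)) has_integral J) {0<..}
        \<longleftrightarrow> (hh \<sigma> c has_integral J) UNIV"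
      by (subst has_integral_restrict_UNIV[symmetric]) (simp add: hh_def[abs_def])
    also have "\<dots> \<longleftrightarrow> J = c * I"
    proof
      assume "(hh \<sigma> c has_integral J) UNIV"
      moreover have "(hh \<sigma> c has_integral (c * I)) UNIV"
        using has_integral_integral_lborel[OF hh_scaled(1)[OF \<sigma> c]] hh_scaled(2)[OF \<sigma> c] by (simp add: I_def)
      ultimately show "J = c * I" by (rule has_integral_unique)
    next
      assume "J = c * I"
      then show "(hh \<sigma> c has_integral J) UNIV"
        using has_integral_integral_lborel[OF hh_scaled(1)[OF \<sigma> c]] hh_scaled(2)[OF \<sigma> c] by (simp add: I_def)
    qed
    finally show ?thesis .
  qed
  have ex: "\<exists>!c. 0 < c \<and> ((\<lambda>x. (f_aux \<sigma> c x)\<^sup>2 / (1 - (f_aux \<sigma> c x)\<^sup>2)) has_integral 1) {0<..}"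
  proof (rule ex1I[of _ "1 / I"])
    show "0 < 1 / I \<and> ((\<lambda>x. (f_aux \<sigma> (1/I) x)\<^sup>2 / (1 - (f_aux \<sigma> (1/I) x)\<^sup>2)) has_integral 1) {0<..}"
      using I key[of "1/I" 1] by simp
  next
    fix c assume "0 < c \<and> ((\<lambda>x. (f_aux \<sigma> c x)\<^sup>2 / (1 - (f_aux \<sigma> c x)\<^sup>2)) has_integral 1) {0<..}"
    then have "0 < c" "1 = c * I" using key by auto
    then show "c = 1 / I" using I by (simp add: field_simps)
  qed
  show ?thesis unfolding c_sigma_def using theI'[OF ex] by simp
qed


lemma ratio_bound:
  assumes \<sigma>: "1/2 < \<sigma>" "\<sigma> < 1"
  shows "norm (mellin_f \<sigma> (complex_of_real (1 - \<sigma>) + \<i> * complex_of_real t) / mellin_f \<sigma> (complex_of_real (1 - \<sigma>)))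
    \<le> (1 - \<sigma>) / sqrt ((1 - \<sigma>)\<^sup>2 + t\<^sup>2)"
proof -
  define C where "C = c_sigma \<sigma>"
  have C: "0 < C" using c_sigma_pos[OF \<sigma>] by (simp add: C_def)
  define s where "s = complex_of_real (1 - \<sigma>) + \<i> * complex_of_real t"
  have Res: "Re s = 1 - \<sigma>" by (simp add: s_def)
  have ns: "norm s = sqrt ((1 - \<sigma>)\<^sup>2 + t\<^sup>2)" by (simp add: s_def cmod_def)
  have eqM: "mellin_f \<sigma> w = (LINT x:{0<..}|lborel. complex_of_real (gg \<sigma> C x) * complex_of_real x powr (w - 1))" for w
    unfolding mellin_f_def by (rule set_lebesgue_integral_cong) (auto simp: gg_def f_sigma_def C_def)
  have sp: "0 < \<sigma>" using \<sigma> by simp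
  have mb: "norm (mellin_f \<sigma> s) \<le> Re s / norm s * norm (mellin_f \<sigma> (complex_of_real (Re s)))"
    unfolding eqM
  proof (rule mellin_bound)
    show "gg \<sigma> C \<in> borel_measurable borel" by (rule gg_meas[OF C sp])
    show "0 \<le> gg \<sigma> C x" if "0 < x" for x using f_aux_props[OF C that, of \<sigma>] that by (simp add: gg_def)
    show "gg \<sigma> C y \<le> gg \<sigma> C x" if "0 < x" "x \<le> y" for x y
      using f_aux_anti[OF C that sp] that by (simp add: gg_def)
    show "\<exists>R. \<forall>x\<ge>R. gg \<sigma> C x \<le> l" if l: "0 < l" for l
    proof -
      obtain R where R: "\<forall>x\<ge>R. f_aux \<sigma> C x \<le> l" using f_aux_decay[OF C sp l] by auto
      show ?thesis
        using l by (intro exI[of _ "max R 1"]) (auto simp: gg_def intro!: R[rule_format])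
    qed
    show "0 < Re s" using Res \<sigma> by simp
  qed
  show ?thesis
  proof (cases "mellin_f \<sigma> (complex_of_real (1 - \<sigma>)) = 0")
    case True
    then show ?thesis using \<sigma> by simp
  next
    case False
    then have "norm (mellin_f \<sigma> s / mellin_f \<sigma> (complex_of_real (1 - \<sigma>)))
       = norm (mellin_f \<sigma> s) / norm (mellin_f \<sigma> (complex_of_real (1 - \<sigma>)))" by (simp add: norm_divide)
    also have "\<dots> \<le> Re s / norm s" using mb False Res by (simp add: divide_le_eq)
    finally have "norm (mellin_f \<sigma> s / mellin_f \<sigma> (complex_of_real (1 - \<sigma>))) \<le> Re s / norm s" .
    then show ?thesis unfolding s_def[symmetric] by (simp only: Res ns)
  qed
qed

lemma final_arith:
  fixes a t :: real
  assumes a: "0 < a" "a < 1/2"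
  shows "a / sqrt (a\<^sup>2 + t\<^sup>2) \<le> (if \<bar>t\<bar> < 1/4 then (1 + (1/10) * t\<^sup>2 / a\<^sup>2) powr (-1/2) else 1 - 1/10)"
proof -
  have q: "0 < sqrt (a\<^sup>2 + t\<^sup>2)" using a by (simp add: add_pos_nonneg)
  show ?thesis
  proof (cases "\<bar>t\<bar> < 1/4")
    case True
    define z where "z = 1 + (1/10) * t\<^sup>2 / a\<^sup>2"
    have z: "0 < z" by (simp add: z_def add_pos_nonneg)
    have zp: "z powr (-1/2) = 1 / sqrt z" using z
      by (simp add: powr_minus_divide powr_half_sqrt[symmetric])
    have "sqrt z * a = sqrt (z * a\<^sup>2)" using a by (simp add: real_sqrt_mult)
    also have "\<dots> \<le> sqrt (a\<^sup>2 + t\<^sup>2)" using a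
      by (intro real_sqrt_le_mono) (simp add: z_def field_simps)
    finally have "sqrt z * a \<le> sqrt (a\<^sup>2 + t\<^sup>2)" .
    then have "a / sqrt (a\<^sup>2 + t\<^sup>2) \<le> 1 / sqrt z" using q z by (simp add: field_simps)
    then show ?thesis using True zp by (simp add: z_def)
  next
    case False
    have "10 * a = sqrt (100 * a\<^sup>2)" using a by (simp add: real_sqrt_mult)
    also have "\<dots> \<le> sqrt (81 * (a\<^sup>2 + t\<^sup>2))"
    proof (rule real_sqrt_le_mono)
      have "a\<^sup>2 \<le> (1/2)\<^sup>2" using a by (intro power_mono) auto
      moreover have "(1/4)\<^sup>2 \<le> t\<^sup>2" using False by (metis abs_le_square_iff abs_of_nonneg not_less zero_le_divide_1_iff zero_le_numeral)
      ultimately show "100 * a\<^sup>2 \<le> 81 * (a\<^sup>2 + t\<^sup>2)" by (simp add: power2_eq_square)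
    qed
    also have "\<dots> = 9 * sqrt (a\<^sup>2 + t\<^sup>2)" by (subst real_sqrt_mult) simp
    finally have "a / sqrt (a\<^sup>2 + t\<^sup>2) \<le> 9/10" using q by (simp add: field_simps)
    then show ?thesis using False by simp
  qed
qed

theorem mainTheorem11:
  shows "\<exists>c::real. c > 0 \<and> (\<forall>\<sigma> t::real. 1/2 < \<sigma> \<and> \<sigma> < 1 \<longrightarrow>
     norm (mellin_f \<sigma> (complex_of_real (1 - \<sigma>) + \<i> * complex_of_real t) / mellin_f \<sigma> (complex_of_real (1 - \<sigma>)))
       \<le> (if \<bar>t\<bar> < 1/4 then (1 + c * t\<^sup>2 / (1 - \<sigma>)\<^sup>2) powr (-1/2) else 1 - c))"
proof (intro exI[of _ "1/10"] conjI allI impI)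
  fix \<sigma> t :: real assume \<sigma>: "1/2 < \<sigma> \<and> \<sigma> < 1"
  show "norm (mellin_f \<sigma> (complex_of_real (1 - \<sigma>) + \<i> * complex_of_real t) / mellin_f \<sigma> (complex_of_real (1 - \<sigma>)))
       \<le> (if \<bar>t\<bar> < 1/4 then (1 + (1/10) * t\<^sup>2 / (1 - \<sigma>)\<^sup>2) powr (-1/2) else 1 - 1/10)"
  proof (rule order_trans)
    show "norm (mellin_f \<sigma> (complex_of_real (1 - \<sigma>) + \<i> * complex_of_real t) / mellin_f \<sigma> (complex_of_real (1 - \<sigma>)))
      \<le> (1 - \<sigma>) / sqrt ((1 - \<sigma>)\<^sup>2 + t\<^sup>2)" using ratio_bound[of \<sigma> t] \<sigma> by simp
    show "(1 - \<sigma>) / sqrt ((1 - \<sigma>)\<^sup>2 + t\<^sup>2) \<le> (if \<bar>t\<bar> < 1/4 then (1 + (1/10) * t\<^sup>2 / (1 - \<sigma>)\<^sup>2) powr (-1/2) else 1 - 1/10)"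
      using final_arith[of "1 - \<sigma>" t] \<sigma> by simp
  qed
qed simp

end
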